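(* Let $s,k,g,l$ be indices with $k\ge1$, $1\le l\le k-1$, $r_l\ge r_s$, $0\le g\le n-1$. (a) If there is a job $j<k$ with $r_s\le r_j<r_l$ and $C^{\mathrm{edf}}_{s,j}>r_l$, then $P_{s,k,g,l}=+\infty$. (b) $P_{s,k,g,l}=0$ if and only if $U_{s,k-1,g}\ge r_l$ and every job $j<k$ with $r_s\le r_j<r_l$ satisfies $C^{\mathrm{edf}}_{s,j}\le r_l$.
   Context: Time is discrete (slots $[t,t+1)$). There are $n$ jobs, job $j$ with integer processing time $p_j\ge1$, release time $r_j$, deadline $d_j$; jobs are indexed so that $d_1<\dots<d_n$, release times are pairwise distinct, and the instance is feasible. A (partial, preemptive) schedule assigns to each slot at most one job so that each job it schedules receives exactly $p_j$ slots in $[r_j,d_j)$, with the earliest-deadline property (whenever busy at slot $t$, run the released, not yet completed scheduled job of smallest deadline). $C_{\max}(S)$ is its completion time. For $s\in\{1,\dots,n\}$, $k\in\{0,\dots,n\}$, an $(s,k)$-schedule is a schedule $S$ with $C_{\max}(S)\le d_k$ scheduling exactly the jobs $j\le k$ with $r_s\le r_j<C_{\max}(S)$; the empty schedule counts, with $C_{\max}=r_s$. Gaps of an $(s,k)$-schedule: maximal idle intervals between its blocks (maximal busy intervals), plus the idle interval from $r_s$ to the first block if nonempty; for $t\ge C_{\max}(S)$, the gaps of $S$ with respect to $[r_s,t)$ are its gaps together with $[C_{\max}(S),t)$ if $C_{\max}(S)<t$. $U_{s,k,g}$ is the maximum completion time of an $(s,k)$-schedule with at most $g$ gaps. For $p\ge0$,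 an $(s,k,p)$-schedule is an $(s,k)$-schedule for the modified instance with $r_k$ replaced by $\max\{r_s,r_k\}$ and $p_k$ by $p$. $\mathrm{prevr}_{k'}(t)=\max\{r_j: j\le k',\ r_j<t\}$ ($-\infty$ if no such $j$). $P_{s,k,g,l}$ is the minimum integer $p\ge0$ for which there is an $(s,k,p)$-schedule $S$ with $\mathrm{prevr}_{k-1}(r_l)<C_{\max}(S)\le r_l$ having at most $g$ gaps with respect to $[r_s,r_l)$, and $+\infty$ if none exists. For $r_j\ge r_s$, $C^{\mathrm{edf}}_{s,j}$ is the minimum completion time of job $j$ over all $(s,j)$-schedules that schedule $j$. *)

theory Defs
  imports Main "HOL-Library.Extended_Real" "HOL-Library.Extended_Nat"
begin

text \<open>Jobs are 1..n; time slots are natural numbers; slot t is the interval [t,t+1).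
  A schedule is a pair (J, sigma): J is the set of scheduled jobs and
  sigma t = Some j means job j runs in slot t (None = idle).\<close>

definition is_sched ::
  "nat \<Rightarrow> (nat \<Rightarrow> nat) \<Rightarrow> (nat \<Rightarrow> nat) \<Rightarrow> (nat \<Rightarrow> nat) \<Rightarrow> nat set \<Rightarrow> (nat \<Rightarrow> nat option) \<Rightarrow> bool" where
  "is_sched n p r d J \<sigma> \<longleftrightarrow>
     J \<subseteq> {1..n} \<and>
     (\<forall>t j. \<sigma> t = Some j \<longrightarrow> j \<in> J \<and> r j \<le> t \<and> t < d j) \<and>
     (\<forall>j\<in>J. card {t. \<sigma> t = Some j} = p j) \<and>
     (\<forall>t j. \<sigma> t = Some j \<longrightarrow>
        (\<forall>i\<in>J. r i \<le> t \<and> card {u. u < t \<and> \<sigma> u = Some i} < p i \<longrightarrow> d j \<le> d i))"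

text \<open>Completion time; the empty schedule has completion time r s.\<close>
definition Cmax :: "(nat \<Rightarrow> nat) \<Rightarrow> nat \<Rightarrow> (nat \<Rightarrow> nat option) \<Rightarrow> nat" where
  "Cmax r s \<sigma> = max (r s) (Sup {Suc t | t. \<sigma> t \<noteq> None})"

definition sk_sched ::
  "nat \<Rightarrow> (nat \<Rightarrow> nat) \<Rightarrow> (nat \<Rightarrow> nat) \<Rightarrow> (nat \<Rightarrow> nat) \<Rightarrow> nat \<Rightarrow> nat \<Rightarrow> nat set \<Rightarrow> (nat \<Rightarrow> nat option) \<Rightarrow> bool" where
  "sk_sched n p r d s k J \<sigma> \<longleftrightarrow>
     is_sched n p r d J \<sigma> \<and> Cmax r s \<sigma> \<le> d k \<and>
     J = {j. 1 \<le> j \<and> j \<le> k \<and> r s \<le> r j \<and> r j < Cmax r s \<sigma>}"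

text \<open>Number of maximal idle intervals contained in [a,b).\<close>
definition ngaps :: "(nat \<Rightarrow> nat option) \<Rightarrow> nat \<Rightarrow> nat \<Rightarrow> nat" where
  "ngaps \<sigma> a b = card {u. a \<le> u \<and> u < b \<and> \<sigma> u = None \<and> (u = a \<or> \<sigma> (u - 1) \<noteq> None)}"

text \<open>U_{s,k,g}; Sup of the empty set is -infinity.\<close>
definition U :: "nat \<Rightarrow> (nat \<Rightarrow> nat) \<Rightarrow> (nat \<Rightarrow> nat) \<Rightarrow> (nat \<Rightarrow> nat) \<Rightarrow> nat \<Rightarrow> nat \<Rightarrow> nat \<Rightarrow> ereal" where
  "U n p r d s k g = Sup {ereal (real (Cmax r s \<sigma>)) | J \<sigma>.
       sk_sched n p r d s k J \<sigma> \<and> ngaps \<sigma> (r s) (Cmax r s \<sigma>) \<le> g}"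

definition skp_sched ::
  "nat \<Rightarrow> (nat \<Rightarrow> nat) \<Rightarrow> (nat \<Rightarrow> nat) \<Rightarrow> (nat \<Rightarrow> nat) \<Rightarrow> nat \<Rightarrow> nat \<Rightarrow> nat \<Rightarrow> nat set \<Rightarrow> (nat \<Rightarrow> nat option) \<Rightarrow> bool" where
  "skp_sched n p r d s k q J \<sigma> \<longleftrightarrow>
     sk_sched n (p(k := q)) (r(k := max (r s) (r k))) d s k J \<sigma>"

text \<open>prevr_{k'}(t); Sup of the empty set is -infinity.\<close>
definition prevr :: "(nat \<Rightarrow> nat) \<Rightarrow> nat \<Rightarrow> nat \<Rightarrow> ereal" where
  "prevr r k' t = Sup {ereal (real (r j)) | j. 1 \<le> j \<and> j \<le> k' \<and> r j < t}"

text \<open>P_{s,k,g,l}; Inf of the empty set of enat is infinity.\<close>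
definition P :: "nat \<Rightarrow> (nat \<Rightarrow> nat) \<Rightarrow> (nat \<Rightarrow> nat) \<Rightarrow> (nat \<Rightarrow> nat) \<Rightarrow> nat \<Rightarrow> nat \<Rightarrow> nat \<Rightarrow> nat \<Rightarrow> enat" where
  "P n p r d s k g l = Inf {enat q | q. \<exists>J \<sigma>.
       skp_sched n p r d s k q J \<sigma> \<and>
       prevr r (k - 1) (r l) < ereal (real (Cmax (r(k := max (r s) (r k))) s \<sigma>)) \<and>
       Cmax (r(k := max (r s) (r k))) s \<sigma> \<le> r l \<and>
       ngaps \<sigma> ((r(k := max (r s) (r k))) s) (r l) \<le> g}"

text \<open>C^edf_{s,j}: minimum completion time of job j over (s,j)-schedules scheduling j
  (infinity if there is none).\<close>
definition Cedf :: "nat \<Rightarrow> (nat \<Rightarrow> nat) \<Rightarrow> (nat \<Rightarrow> nat) \<Rightarrow> (nat \<Rightarrow> nat) \<Rightarrow> nat \<Rightarrow> nat \<Rightarrow> enat" where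
  "Cedf n p r d s j = Inf {enat (Suc (Max {t. \<sigma> t = Some j})) | J \<sigma>.
       sk_sched n p r d s j J \<sigma> \<and> j \<in> J}"

definition feasible :: "nat \<Rightarrow> (nat \<Rightarrow> nat) \<Rightarrow> (nat \<Rightarrow> nat) \<Rightarrow> (nat \<Rightarrow> nat) \<Rightarrow> bool" where
  "feasible n p r d \<longleftrightarrow> (\<exists>\<sigma> :: nat \<Rightarrow> nat option.
     (\<forall>t j. \<sigma> t = Some j \<longrightarrow> j \<in> {1..n} \<and> r j \<le> t \<and> t < d j) \<and>
     (\<forall>j\<in>{1..n}. card {t. \<sigma> t = Some j} = p j))"

end

theory Submission
  imports Defs
begin


definition valid :: "(nat \<Rightarrow> nat) \<Rightarrow> (nat \<Rightarrow> nat) \<Rightarrow> (nat \<Rightarrow> nat) \<Rightarrow> nat set \<Rightarrow> (nat \<Rightarrow> nat option) \<Rightarrow> bool" where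
  "valid p r d X \<pi> \<longleftrightarrow> (\<forall>t j. \<pi> t = Some j \<longrightarrow> j \<in> X \<and> r j \<le> t \<and> t < d j) \<and> (\<forall>j\<in>X. card {t. \<pi> t = Some j} = p j)"

definition units :: "(nat \<Rightarrow> nat option) \<Rightarrow> nat set \<Rightarrow> nat set" where
  "units \<pi> X = {t. \<exists>i\<in>X. \<pi> t = Some i}"

lemma validD: "valid p r d X \<pi> \<Longrightarrow> \<pi> t = Some j \<Longrightarrow> j \<in> X \<and> r j \<le> t \<and> t < d j"
  by (simp add: valid_def)

lemma validC: "valid p r d X \<pi> \<Longrightarrow> j \<in> X \<Longrightarrow> card {t. \<pi> t = Some j} = p j"
  by (simp add: valid_def)

lemma fin_slots: "valid p r d X \<pi> \<Longrightarrow> finite {t. \<pi> t = Some j}"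
  by (rule finite_subset[of _ "{..<d j}"]) (auto dest: validD)

lemma card_units: assumes "valid p r d Y \<pi>" "finite X" "X \<subseteq> Y"
  shows "card (units \<pi> X) = sum p X"
proof -
  have "units \<pi> X = (\<Union>i\<in>X. {t. \<pi> t = Some i})" by (auto simp: units_def)
  also have "card \<dots> = (\<Sum>i\<in>X. card {t. \<pi> t = Some i})"
    by (rule card_UN_disjoint) (use assms fin_slots in auto)
  also have "\<dots> = sum p X" using assms by (auto intro!: sum.cong simp: validC)
  finally show ?thesis .
qed

lemma finite_units: "valid p r d Y \<pi> \<Longrightarrow> finite X \<Longrightarrow> finite (units \<pi> X)"
proof -
  assume a: "valid p r d Y \<pi>" "finite X"
  have "units \<pi> X = (\<Union>i\<in>X. {t. \<pi> t = Some i})" by (auto simp: units_def)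
  thus ?thesis using a fin_slots by auto
qed

lemma finite_supp: assumes "valid p r d X \<pi>" "finite X" shows "finite {t. \<pi> t \<noteq> None}"
proof -
  have "{t. \<pi> t \<noteq> None} = units \<pi> X" using assms(1) by (auto simp: units_def dest: validD)
  thus ?thesis using finite_units assms by metis
qed

lemma Cmax_ge_rs: "r s \<le> Cmax r s \<pi>" by (simp add: Cmax_def)

lemma Cmax_ge: assumes "finite {t. \<pi> t \<noteq> None}" "\<pi> t \<noteq> None" shows "Suc t \<le> Cmax r s \<pi>"
proof -
  have e: "{Suc t |t. \<pi> t \<noteq> None} = Suc ` {t. \<pi> t \<noteq> None}" by auto
  have "bdd_above {Suc t |t. \<pi> t \<noteq> None}" unfolding e using assms(1) by (intro bdd_above_finite) auto
  hence "Suc t \<le> Sup {Suc t |t. \<pi> t \<noteq> None}" using assms(2) by (intro cSup_upper) auto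
  thus ?thesis by (simp add: Cmax_def)
qed

lemma Cmax_le: assumes "r s \<le> M" "\<And>t. \<pi> t \<noteq> None \<Longrightarrow> Suc t \<le> M" shows "Cmax r s \<pi> \<le> M"
proof (cases "{Suc t |t. \<pi> t \<noteq> None} = {}")
  case True thus ?thesis using assms by (simp add: Cmax_def)
next
  case False
  hence "Sup {Suc t |t. \<pi> t \<noteq> None} \<le> M" using assms(2) by (intro cSup_least) auto
  thus ?thesis using assms by (simp add: Cmax_def)
qed

lemma Cmax_eq: assumes "finite {t. \<pi> t \<noteq> None}" "\<pi> (C - 1) \<noteq> None" "0 < C" "\<And>t. \<pi> t \<noteq> None \<Longrightarrow> t < C" "r s \<le> C"
  shows "Cmax r s \<pi> = C"
proof -
  have "Suc (C - 1) \<le> Cmax r s \<pi>" by (rule Cmax_ge) (use assms in auto)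
  moreover have "Cmax r s \<pi> \<le> C" by (rule Cmax_le) (use assms in \<open>auto simp: Suc_le_eq\<close>)
  ultimately show ?thesis using assms by simp
qed

definition phi :: "nat \<Rightarrow> nat \<Rightarrow> (nat \<Rightarrow> nat option) \<Rightarrow> nat" where
  "phi n H \<pi> = (\<Sum>t<H. case \<pi> t of None \<Rightarrow> 0 | Some j \<Rightarrow> t * (Suc n - j))"

lemma sum_upd2:
  fixes f g :: "nat \<Rightarrow> nat"
  assumes "finite A" "t \<in> A" "u \<in> A" "t \<noteq> u" "\<And>x. x \<noteq> t \<Longrightarrow> x \<noteq> u \<Longrightarrow> f x = g x"
  shows "sum f A + g t + g u = sum g A + f t + f u"
proof -
  have f: "sum f A = f t + (f u + sum f (A - {t} - {u}))"
    using assms by (simp add: sum.remove[of A t] sum.remove[of "A - {t}" u])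
  have g: "sum g A = g t + (g u + sum g (A - {t} - {u}))"
    using assms by (simp add: sum.remove[of A t] sum.remove[of "A - {t}" u])
  have "sum f (A - {t} - {u}) = sum g (A - {t} - {u})" using assms by (intro sum.cong) auto
  thus ?thesis using f g by simp
qed

lemma phi_upd2:
  assumes "t < H" "u < H" "t \<noteq> u" "\<And>x. x \<noteq> t \<Longrightarrow> x \<noteq> u \<Longrightarrow> \<pi>' x = \<pi> x"
  shows "phi n H \<pi>' + (case \<pi> t of None \<Rightarrow> 0 | Some j \<Rightarrow> t * (Suc n - j)) + (case \<pi> u of None \<Rightarrow> 0 | Some j \<Rightarrow> u * (Suc n - j))
       = phi n H \<pi> + (case \<pi>' t of None \<Rightarrow> 0 | Some j \<Rightarrow> t * (Suc n - j)) + (case \<pi>' u of None \<Rightarrow> 0 | Some j \<Rightarrow> u * (Suc n - j))"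
  unfolding phi_def
  by (rule sum_upd2[where f="\<lambda>t. case \<pi>' t of None \<Rightarrow> 0 | Some j \<Rightarrow> t * (Suc n - j)"
      and g="\<lambda>t. case \<pi> t of None \<Rightarrow> 0 | Some j \<Rightarrow> t * (Suc n - j)"]) (use assms in auto)

lemma move_valid:
  assumes v: "valid p r d X \<pi>" and "\<pi> u = Some i" "\<pi> t = None" "t < u" "r i \<le> t"
  shows "valid p r d X (\<pi>(t := Some i, u := None))"
proof -
  have ui: "i \<in> X \<and> r i \<le> u \<and> u < d i" using validD[OF v assms(2)] .
  have tdi: "t < d i" using ui assms by linarith
  have w: "\<forall>x j. (\<pi>(t := Some i, u := None)) x = Some j \<longrightarrow> j \<in> X \<and> r j \<le> x \<and> x < d j"
    using assms ui tdi validD[OF v] by auto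
  have c: "card {x. (\<pi>(t := Some i, u := None)) x = Some j} = p j" if j: "j \<in> X" for j
  proof (cases "j = i")
    case True
    have fin: "finite {x. \<pi> x = Some i}" using fin_slots[OF v] .
    have "{x. (\<pi>(t := Some i, u := None)) x = Some j} = insert t ({x. \<pi> x = Some i} - {u})"
      using True assms by auto
    also have "card \<dots> = card ({x. \<pi> x = Some i} - {u}) + 1"
      using fin assms by (subst card_insert_disjoint) auto
    also have "\<dots> = card {x. \<pi> x = Some i}"
    proof -
      have "u \<in> {x. \<pi> x = Some i}" using assms by simp
      hence "card {x. \<pi> x = Some i} > 0" using fin card_gt_0_iff by blast
      thus ?thesis using \<open>u \<in> {x. \<pi> x = Some i}\<close> by (simp add: card_Diff_singleton)
    qed
    finally show ?thesis using validC[OF v j] True by simp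
  next
    case False
    have "{x. (\<pi>(t := Some i, u := None)) x = Some j} = {x. \<pi> x = Some j}"
      using False assms by auto
    thus ?thesis using validC[OF v j] by simp
  qed
  show ?thesis using w c by (simp add: valid_def)
qed

lemma move_phi:
  assumes "\<pi> u = Some i" "\<pi> t = None" "t < u" "u < H" "i \<le> n"
  shows "phi n H (\<pi>(t := Some i, u := None)) < phi n H \<pi>"
proof -
  have e: "phi n H (\<pi>(t := Some i, u := None)) + 0 + u * (Suc n - i) = phi n H \<pi> + t * (Suc n - i) + 0"
    using phi_upd2[of t H u "\<pi>(t := Some i, u := None)" \<pi> n] assms by auto
  have "t * (Suc n - i) < u * (Suc n - i)" using assms by simp
  thus ?thesis using e by linarith
qed

lemma swap_valid:
  assumes v: "valid p r d X \<pi>" and "\<pi> t = Some j" "\<pi> u = Some i" "t < u" "r i \<le> t" "d i < d j"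
  shows "valid p r d X (\<pi>(t := Some i, u := Some j))"
proof -
  have ui: "i \<in> X \<and> r i \<le> u \<and> u < d i" using validD[OF v assms(3)] .
  have tj: "j \<in> X \<and> r j \<le> t \<and> t < d j" using validD[OF v assms(2)] .
  have ij: "i \<noteq> j" using assms by auto
  have ex: "t < d i" "r j \<le> u" "u < d j" using ui tj assms by linarith+
  have w: "\<forall>x j'. (\<pi>(t := Some i, u := Some j)) x = Some j' \<longrightarrow> j' \<in> X \<and> r j' \<le> x \<and> x < d j'"
    using assms ui tj ex validD[OF v] by auto
  have sw: "card (insert a (S - {b})) = card S" if "finite S" "b \<in> S" "a \<notin> S" for a b and S :: "nat set"
  proof -
    have "card S > 0" using that card_gt_0_iff by blast
    thus ?thesis using that by (simp add: card_insert_disjoint card_Diff_singleton)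
  qed
  have c: "card {x. (\<pi>(t := Some i, u := Some j)) x = Some j'} = p j'" if j': "j' \<in> X" for j'
  proof -
    consider "j' = i" | "j' = j" | "j' \<noteq> i \<and> j' \<noteq> j" by blast
    thus ?thesis
    proof cases
      case 1
      have "{x. (\<pi>(t := Some i, u := Some j)) x = Some j'} = insert t ({x. \<pi> x = Some i} - {u})"
        using 1 assms ij by auto
      moreover have "card (insert t ({x. \<pi> x = Some i} - {u})) = card {x. \<pi> x = Some i}"
        by (rule sw) (use fin_slots[OF v] assms ij in auto)
      ultimately show ?thesis using validC[OF v j'] 1 by simp
    next
      case 2
      have "{x. (\<pi>(t := Some i, u := Some j)) x = Some j'} = insert u ({x. \<pi> x = Some j} - {t})"
        using 2 assms ij by auto
      moreover have "card (insert u ({x. \<pi> x = Some j} - {t})) = card {x. \<pi> x = Some j}"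
        by (rule sw) (use fin_slots[OF v] assms ij in auto)
      ultimately show ?thesis using validC[OF v j'] 2 by simp
    next
      case 3
      have "{x. (\<pi>(t := Some i, u := Some j)) x = Some j'} = {x. \<pi> x = Some j'}"
        using 3 assms by auto
      thus ?thesis using validC[OF v j'] by simp
    qed
  qed
  show ?thesis using w c by (simp add: valid_def)
qed

lemma swap_phi:
  assumes "\<pi> t = Some j" "\<pi> u = Some i" "t < u" "u < H" "i < j" "j \<le> n"
  shows "phi n H (\<pi>(t := Some i, u := Some j)) < phi n H \<pi>"
proof -
  have e: "phi n H (\<pi>(t := Some i, u := Some j)) + t * (Suc n - j) + u * (Suc n - i)
      = phi n H \<pi> + t * (Suc n - i) + u * (Suc n - j)"
    using phi_upd2[of t H u "\<pi>(t := Some i, u := Some j)" \<pi> n] assms by auto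
  define a where "a = Suc n - j"
  define e' where "e' = j - i"
  have ae: "Suc n - j = a" "Suc n - i = a + e'" "0 < e'" using assms unfolding a_def e'_def by auto
  have "t * e' < u * e'" using assms ae by simp
  hence "t * (Suc n - i) + u * (Suc n - j) < t * (Suc n - j) + u * (Suc n - i)"
    unfolding ae by (simp add: algebra_simps)
  thus ?thesis using e by linarith
qed



lemma Cmax_upd: "Cmax (r(k := max (r s) (r k))) s \<sigma> = Cmax r s \<sigma>"
  by (cases "s = k") (simp_all add: Cmax_def)

lemma is_sched_valid: "is_sched n p r d J \<sigma> \<Longrightarrow> valid p r d J \<sigma>"
  by (simp add: is_sched_def valid_def)

locale inst =
  fixes n :: nat and p r d :: "nat \<Rightarrow> nat"
  assumes p_pos: "\<forall>j\<in>{1..n}. 1 \<le> p j"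
    and d_mono: "\<forall>i j. 1 \<le> i \<and> i < j \<and> j \<le> n \<longrightarrow> d i < d j"
    and feas: "feasible n p r d"
begin

lemma d_le: "1 \<le> i \<Longrightarrow> i \<le> j \<Longrightarrow> j \<le> n \<Longrightarrow> d i \<le> d j"
  using d_mono by (cases "i = j") (auto simp: order_less_imp_le)

lemma d_lt_idx: assumes "i \<in> {1..n}" "j \<in> {1..n}" "d i < d j" shows "i < j"
proof (rule ccontr)
  assume "\<not> i < j" hence "j \<le> i" by simp
  hence "d j \<le> d i" using d_le assms by auto
  thus False using assms by simp
qed

lemma r_lt_d: assumes "j \<in> {1..n}" shows "r j < d j"
proof -
  obtain \<psi> :: "nat \<Rightarrow> nat option" where a: "\<forall>t j. \<psi> t = Some j \<longrightarrow> j \<in> {1..n} \<and> r j \<le> t \<and> t < d j"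
    "\<forall>j\<in>{1..n}. card {t. \<psi> t = Some j} = p j" using feas unfolding feasible_def by blast
  have "card {t. \<psi> t = Some j} \<ge> 1" using a(2) p_pos assms by auto
  then obtain t where "\<psi> t = Some j" by (metis (mono_tags, lifting) Collect_empty_eq card.empty not_one_le_zero)
  thus ?thesis using a(1) by force
qed

lemma exists_unit: assumes "valid p' r' d X \<pi>" "j \<in> X" "p' j \<ge> 1" shows "\<exists>t. \<pi> t = Some j"
proof -
  have "card {t. \<pi> t = Some j} \<ge> 1" using validC[OF assms(1,2)] assms(3) by simp
  thus ?thesis by (metis (mono_tags, lifting) Collect_empty_eq card.empty not_one_le_zero)
qed

lemma restrict_Cedf:
  assumes sk: "skp_sched n p r d s k q J \<sigma>" and j: "1 \<le> j" "j < k" "k \<le> n" "r s \<le> r j" "r j < Cmax r s \<sigma>"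
  shows "Cedf n p r d s j \<le> enat (Cmax r s \<sigma>)"
proof -
  define p' where "p' = p(k := q)"
  define r' where "r' = r(k := max (r s) (r k))"
  have r's: "r' s = r s" by (simp add: r'_def)
  have sk0: "sk_sched n p' r' d s k J \<sigma>" using sk by (simp add: skp_sched_def p'_def r'_def)
  have CC: "Cmax r' s \<sigma> = Cmax r s \<sigma>" unfolding r'_def by (rule Cmax_upd)
  have sk': "is_sched n p' r' d J \<sigma>" "Cmax r s \<sigma> \<le> d k"
     "J = {i. 1 \<le> i \<and> i \<le> k \<and> r s \<le> r' i \<and> r' i < Cmax r s \<sigma>}"
    using sk0 CC r's unfolding sk_sched_def by metis+
  have v: "valid p' r' d J \<sigma>" using is_sched_valid[OF sk'(1)] .
  have Jn: "J \<subseteq> {1..n}" using sk'(1) by (simp add: is_sched_def)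
  have finJ: "finite J" using Jn finite_subset by blast
  have fs: "finite {t. \<sigma> t \<noteq> None}" using finite_supp[OF v finJ] .
  define \<sigma>j where "\<sigma>j = (\<lambda>t. case \<sigma> t of None \<Rightarrow> None | Some i \<Rightarrow> if i \<le> j then Some i else None)"
  define J' where "J' = {i \<in> J. i \<le> j}"
  have sj: "\<sigma>j t = Some i \<longleftrightarrow> \<sigma> t = Some i \<and> i \<le> j" for t i
    by (auto simp: \<sigma>j_def split: option.splits)
  have r'eq: "r' i = r i" if "i \<le> j" for i using that j by (simp add: r'_def)
  have p'eq: "p' i = p i" if "i \<le> j" for i using that j by (simp add: p'_def)
  have jJ: "j \<in> J" using j sk'(3) r'eq[of j] by simp
  have slots_eq: "{t. \<sigma>j t = Some i} = {t. \<sigma> t = Some i}" if "i \<le> j" for i using that sj by auto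
  have fsj: "finite {t. \<sigma>j t \<noteq> None}" by (rule finite_subset[OF _ fs]) (auto simp: \<sigma>j_def split: option.splits)
  have Cle: "Cmax r s \<sigma>j \<le> Cmax r s \<sigma>"
    by (rule Cmax_le) (use Cmax_ge_rs Cmax_ge[OF fs] sj in \<open>auto simp: \<sigma>j_def split: option.splits if_splits\<close>)
  have isj: "is_sched n p r d J' \<sigma>j"
    unfolding is_sched_def
  proof (intro conjI allI impI ballI)
    show "J' \<subseteq> {1..n}" using Jn by (auto simp: J'_def)
  next
    fix t i assume a: "\<sigma>j t = Some i"
    hence b: "\<sigma> t = Some i" "i \<le> j" using sj by auto
    show "i \<in> J'" using validD[OF v b(1)] b by (simp add: J'_def)
    show "r i \<le> t" "t < d i" using validD[OF v b(1)] r'eq[OF b(2)] by auto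
  next
    fix i assume "i \<in> J'"
    hence "i \<in> J" "i \<le> j" by (auto simp: J'_def)
    thus "card {t. \<sigma>j t = Some i} = p i" using validC[OF v] slots_eq p'eq by simp
  next
    fix t i i' assume a: "\<sigma>j t = Some i" "i' \<in> J'" "r i' \<le> t \<and> card {u. u < t \<and> \<sigma>j u = Some i'} < p i'"
    hence b: "\<sigma> t = Some i" "i' \<in> J" "i' \<le> j" using sj by (auto simp: J'_def)
    have "{u. u < t \<and> \<sigma>j u = Some i'} = {u. u < t \<and> \<sigma> u = Some i'}" using b(3) sj by auto
    hence "r' i' \<le> t \<and> card {u. u < t \<and> \<sigma> u = Some i'} < p' i'" using a(3) r'eq[OF b(3)] p'eq[OF b(3)] by simp
    thus "d i \<le> d i'" using sk'(1) b unfolding is_sched_def by blast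
  qed
  have junit: "\<exists>t. \<sigma> t = Some j" using exists_unit[OF v jJ] p'eq[of j] p_pos j by auto
  have Cj: "Cmax r s \<sigma>j \<le> d j"
  proof (rule Cmax_le)
    obtain t where "\<sigma> t = Some j" using junit by blast
    hence "r j < d j" using validD[OF v] r'eq[of j] by fastforce
    thus "r s \<le> d j" using j by simp
  next
    fix t assume "\<sigma>j t \<noteq> None"
    then obtain i where "\<sigma> t = Some i" "i \<le> j" using sj by (cases "\<sigma>j t") auto
    hence "t < d i" "1 \<le> i" using validD[OF v] Jn by fastforce+
    thus "Suc t \<le> d j" using d_le[of i j] \<open>i \<le> j\<close> j by simp
  qed
  have J'eq: "J' = {i. 1 \<le> i \<and> i \<le> j \<and> r s \<le> r i \<and> r i < Cmax r s \<sigma>j}"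
  proof (intro set_eqI iffI)
    fix i assume "i \<in> J'"
    hence iJ: "i \<in> J" "i \<le> j" by (auto simp: J'_def)
    have "1 \<le> i" "r s \<le> r i" using iJ sk'(3) r'eq by auto
    moreover have "\<exists>t. \<sigma> t = Some i" using exists_unit[OF v iJ(1)] p'eq[OF iJ(2)] p_pos Jn iJ by auto
    then obtain t where t: "\<sigma> t = Some i" by blast
    hence "r i \<le> t" using validD[OF v] r'eq[OF iJ(2)] by fastforce
    moreover have "Suc t \<le> Cmax r s \<sigma>j" using Cmax_ge[OF fsj, of t] sj t iJ by auto
    ultimately show "i \<in> {i. 1 \<le> i \<and> i \<le> j \<and> r s \<le> r i \<and> r i < Cmax r s \<sigma>j}" using iJ by auto
  next
    fix i assume "i \<in> {i. 1 \<le> i \<and> i \<le> j \<and> r s \<le> r i \<and> r i < Cmax r s \<sigma>j}"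
    thus "i \<in> J'" using sk'(3) r'eq Cle j unfolding J'_def by auto
  qed
  have skj: "sk_sched n p r d s j J' \<sigma>j" unfolding sk_sched_def using isj Cj J'eq by simp
  have j'J: "j \<in> J'" using jJ by (simp add: J'_def)
  have finj: "finite {t. \<sigma>j t = Some j}" using slots_eq[of j] fin_slots[OF v] by simp
  have nej: "{t. \<sigma>j t = Some j} \<noteq> {}" using junit slots_eq[of j] by auto
  have "Max {t. \<sigma>j t = Some j} \<in> {t. \<sigma>j t = Some j}" using Max_in[OF finj nej] .
  hence "Suc (Max {t. \<sigma>j t = Some j}) \<le> Cmax r s \<sigma>" using Cmax_ge[OF fs] sj by auto
  moreover have "Cedf n p r d s j \<le> enat (Suc (Max {t. \<sigma>j t = Some j}))"
    unfolding Cedf_def by (rule Inf_lower) (use skj j'J in blast)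
  ultimately show ?thesis by (meson enat_ord_simps(1) order_trans)
qed

end


context inst begin

lemma prevr_ge: assumes "1 \<le> j" "j \<le> k'" "r j < t" shows "ereal (real (r j)) \<le> prevr r k' t"
  unfolding prevr_def by (rule Sup_upper) (use assms in blast)

lemma witness_Cedf:
  assumes sk: "skp_sched n p r d s k q J \<sigma>"
    and pv: "prevr r (k - 1) (r l) < ereal (real (Cmax (r(k := max (r s) (r k))) s \<sigma>))"
    and Cl: "Cmax (r(k := max (r s) (r k))) s \<sigma> \<le> r l"
    and j: "1 \<le> j" "j < k" "k \<le> n" "r s \<le> r j" "r j < r l"
  shows "Cedf n p r d s j \<le> enat (r l)"
proof -
  have "ereal (real (r j)) \<le> prevr r (k - 1) (r l)" using prevr_ge j by simp
  hence "ereal (real (r j)) < ereal (real (Cmax r s \<sigma>))" using pv unfolding Cmax_upd by (rule le_less_trans)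
  hence "r j < Cmax r s \<sigma>" by simp
  hence "Cedf n p r d s j \<le> enat (Cmax r s \<sigma>)" using restrict_Cedf[OF sk j(1-4)] by simp
  thus ?thesis using Cl by (simp add: Cmax_upd) (meson enat_ord_simps(1) order_trans)
qed

definition H :: nat where "H = Max (d ` {1..n})"

lemma unit_lt_H: assumes "valid p r d X \<pi>" "X \<subseteq> {1..n}" "\<pi> t = Some i" shows "t < H"
proof -
  have "i \<in> {1..n}" "t < d i" using validD[OF assms(1,3)] assms(2) by auto
  moreover have "d i \<le> H" unfolding H_def using \<open>i \<in> {1..n}\<close> by (intro Max_ge) auto
  ultimately show ?thesis by simp
qed

lemma phi_min_exists:
  assumes "S \<pi>0" shows "\<exists>\<pi>. S \<pi> \<and> (\<forall>\<pi>'. S \<pi>' \<longrightarrow> phi n H \<pi> \<le> phi n H \<pi>')"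
  using ex_has_least_nat[of S \<pi>0 "phi n H"] assms by blast

end


context inst begin

lemma U_from_P0:
  assumes sk: "skp_sched n p r d s k 0 J \<sigma>"
    and pv: "prevr r (k - 1) (r l) < ereal (real (Cmax r s \<sigma>))"
    and Cl: "Cmax r s \<sigma> \<le> r l"
    and gp: "ngaps \<sigma> (r s) (r l) \<le> g"
    and k: "k \<le> n" and l: "1 \<le> l" "l \<le> k - 1" and rl: "r s \<le> r l"
  shows "ereal (real (r l)) \<le> U n p r d s (k - 1) g"
proof -
  define p' where "p' = p(k := 0)"
  define r' where "r' = r(k := max (r s) (r k))"
  define C\<sigma> where "C\<sigma> = Cmax r s \<sigma>"
  have r's: "r' s = r s" by (simp add: r'_def)
  have sk0: "sk_sched n p' r' d s k J \<sigma>" using sk by (simp add: skp_sched_def p'_def r'_def)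
  have CC: "Cmax r' s \<sigma> = Cmax r s \<sigma>" unfolding r'_def by (rule Cmax_upd)
  have sk': "is_sched n p' r' d J \<sigma>" "J = {i. 1 \<le> i \<and> i \<le> k \<and> r s \<le> r' i \<and> r' i < C\<sigma>}"
    using sk0 CC r's unfolding sk_sched_def C\<sigma>_def by metis+
  have v: "valid p' r' d J \<sigma>" using is_sched_valid[OF sk'(1)] .
  have Jn: "J \<subseteq> {1..n}" using sk'(1) by (simp add: is_sched_def)
  have finJ: "finite J" using Jn finite_subset by blast
  have fs: "finite {t. \<sigma> t \<noteq> None}" using finite_supp[OF v finJ] .
  have r'eq: "r' i = r i" if "i \<noteq> k" for i using that by (simp add: r'_def)
  have p'eq: "p' i = p i" if "i \<noteq> k" for i using that by (simp add: p'_def)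
  have nok: "\<sigma> t \<noteq> Some k" for t
  proof
    assume a: "\<sigma> t = Some k"
    hence "k \<in> J" using validD[OF v] by blast
    hence "card {t. \<sigma> t = Some k} = 0" using validC[OF v] by (simp add: p'_def)
    thus False using fin_slots[OF v, of k] a by auto
  qed
  have sig: "i \<in> J \<and> i \<noteq> k \<and> r i \<le> t \<and> t < d i \<and> t < C\<sigma> \<and> 1 \<le> i \<and> i \<le> k - 1 \<and> r s \<le> r i \<and> r i < C\<sigma>"
    if "\<sigma> t = Some i" for t i
  proof -
    have a: "i \<in> J" "r' i \<le> t" "t < d i" using validD[OF v that] by auto
    have b: "i \<noteq> k" using nok that by blast
    have "Suc t \<le> C\<sigma>" unfolding C\<sigma>_def using Cmax_ge[OF fs] that by simp
    thus ?thesis using a b sk'(2) r'eq[OF b] by auto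
  qed
  have Jchar: "i \<in> J \<and> i \<noteq> k \<longleftrightarrow> 1 \<le> i \<and> i \<le> k - 1 \<and> r s \<le> r i \<and> r i < C\<sigma>" for i
    using sk'(2) r'eq by auto
  have nomid: "\<not> (1 \<le> i \<and> i \<le> k - 1 \<and> C\<sigma> \<le> r i \<and> r i < r l)" for i
  proof
    assume a: "1 \<le> i \<and> i \<le> k - 1 \<and> C\<sigma> \<le> r i \<and> r i < r l"
    hence "ereal (real (r i)) \<le> prevr r (k - 1) (r l)" using prevr_ge by auto
    hence "ereal (real (r i)) < ereal (real C\<sigma>)" using pv unfolding C\<sigma>_def by (rule le_less_trans)
    thus False using a by simp
  qed
  have CsL: "C\<sigma> \<le> r l" using Cl C\<sigma>_def by simp
  define J2 where "J2 = {i. 1 \<le> i \<and> i \<le> k - 1 \<and> r l \<le> r i}"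
  have J2n: "J2 \<subseteq> {1..n}" using k by (auto simp: J2_def)
  have finJ2: "finite J2" using J2n finite_subset by blast
  obtain \<psi> :: "nat \<Rightarrow> nat option" where fa: "\<forall>t j. \<psi> t = Some j \<longrightarrow> j \<in> {1..n} \<and> r j \<le> t \<and> t < d j"
    "\<forall>j\<in>{1..n}. card {t. \<psi> t = Some j} = p j" using feas unfolding feasible_def by blast
  define \<psi>2 where "\<psi>2 = (\<lambda>t. case \<psi> t of None \<Rightarrow> None | Some i \<Rightarrow> if i \<in> J2 then Some i else None)"
  have v2: "valid p r d J2 \<psi>2"
  proof -
    have "{t. \<psi>2 t = Some j} = {t. \<psi> t = Some j}" if "j \<in> J2" for j
      using that by (auto simp: \<psi>2_def split: option.splits)
    thus ?thesis using fa J2n unfolding valid_def \<psi>2_def by (auto split: option.splits if_splits)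
  qed
  obtain \<phi> where \<phi>v: "valid p r d J2 \<phi>" and \<phi>min: "\<And>\<pi>'. valid p r d J2 \<pi>' \<Longrightarrow> phi n H \<phi> \<le> phi n H \<pi>'"
    using phi_min_exists[of "valid p r d J2", OF v2] by blast
  have L: False if "\<phi> t = None" "\<phi> u = Some i" "r i \<le> t" "t < u" for t u i
  proof -
    have "u < H" using unit_lt_H[OF \<phi>v J2n that(2)] .
    moreover have "i \<le> n" using validD[OF \<phi>v that(2)] J2n by auto
    ultimately have "phi n H (\<phi>(t := Some i, u := None)) < phi n H \<phi>" using move_phi that by blast
    moreover have "valid p r d J2 (\<phi>(t := Some i, u := None))" using move_valid[OF \<phi>v that(2,1,4,3)] .
    ultimately show False using \<phi>min by fastforce
  qed
  have E: "d j \<le> d i" if "\<phi> t = Some j" "\<phi> u = Some i" "t < u" "r i \<le> t" for t u i j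
  proof (rule ccontr)
    assume "\<not> d j \<le> d i" hence dd: "d i < d j" by simp
    have ij: "i \<in> {1..n}" "j \<in> {1..n}" using validD[OF \<phi>v that(1)] validD[OF \<phi>v that(2)] J2n by auto
    have "i < j" using d_lt_idx[OF ij dd] .
    moreover have "u < H" using unit_lt_H[OF \<phi>v J2n that(2)] .
    ultimately have "phi n H (\<phi>(t := Some i, u := Some j)) < phi n H \<phi>" using swap_phi that ij by auto
    moreover have "valid p r d J2 (\<phi>(t := Some i, u := Some j))" using swap_valid[OF \<phi>v that(1,2,3,4) dd] .
    ultimately show False using \<phi>min by fastforce
  qed
  have \<phi>u: "i \<in> J2 \<and> r l \<le> r i \<and> r i \<le> t \<and> t < d i \<and> 1 \<le> i \<and> i \<le> k - 1" if "\<phi> t = Some i" for t i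
    using validD[OF \<phi>v that] by (auto simp: J2_def)
  define C where "C = (LEAST t. r l \<le> t \<and> \<phi> t = None)"
  have exC: "r l \<le> max (r l) H \<and> \<phi> (max (r l) H) = None"
  proof -
    have "\<phi> (max (r l) H) \<noteq> Some i" for i using unit_lt_H[OF \<phi>v J2n, of "max (r l) H" i] by auto
    thus ?thesis by (cases "\<phi> (max (r l) H)") auto
  qed
  have C1: "r l \<le> C" "\<phi> C = None" using LeastI[of "\<lambda>t. r l \<le> t \<and> \<phi> t = None", OF exC] C_def by auto
  have C2: "\<phi> t \<noteq> None" if "r l \<le> t" "t < C" for t using not_less_Least[of t "\<lambda>t. r l \<le> t \<and> \<phi> t = None"] that C_def by auto
  have lJ2: "l \<in> J2" using l by (simp add: J2_def)
  have "\<exists>u. \<phi> u = Some l" using exists_unit[OF \<phi>v lJ2] p_pos l k by auto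
  then obtain ul where ul: "\<phi> ul = Some l" by blast
  have "\<phi> (r l) \<noteq> None"
  proof
    assume a: "\<phi> (r l) = None"
    have "r l \<le> ul" using \<phi>u[OF ul] by simp
    moreover have "ul \<noteq> r l" using a ul by auto
    ultimately show False using L[OF a ul] by simp
  qed
  hence rlC: "r l < C" using C1 by (metis le_neq_implies_less)
  have F3: "t < C" if "\<phi> t = Some i" "r i < C" for t i
  proof (rule ccontr)
    assume "\<not> t < C"
    moreover have "t \<noteq> C" using that C1 by auto
    ultimately have "C < t" by simp
    thus False using L[OF C1(2) that(1)] that by simp
  qed
  define \<rho> where "\<rho> = (\<lambda>t. if t < r l then \<sigma> t else if t < C then \<phi> t else None)"
  define J\<rho> where "J\<rho> = {i \<in> J. i \<noteq> k} \<union> {i \<in> J2. r i < C}"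
  have \<rho>cases: "(t < r l \<and> \<sigma> t = Some i) \<or> (r l \<le> t \<and> t < C \<and> \<phi> t = Some i)" if "\<rho> t = Some i" for t i
    using that by (auto simp: \<rho>_def split: if_splits)
  have slotsJ: "{t. \<rho> t = Some i} = {t. \<sigma> t = Some i}" if "i \<in> J" "i \<noteq> k" for i
  proof (intro set_eqI iffI)
    fix t assume "t \<in> {t. \<rho> t = Some i}"
    hence "\<rho> t = Some i" by simp
    thus "t \<in> {t. \<sigma> t = Some i}" using \<rho>cases[of t i] \<phi>u[of t i] Jchar[of i] that CsL by auto
  next
    fix t assume "t \<in> {t. \<sigma> t = Some i}"
    thus "t \<in> {t. \<rho> t = Some i}" using sig[of t i] CsL by (auto simp: \<rho>_def)
  qed
  have slotsJ2: "{t. \<rho> t = Some i} = {t. \<phi> t = Some i}" if "i \<in> J2" "r i < C" for i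
  proof (intro set_eqI iffI)
    fix t assume "t \<in> {t. \<rho> t = Some i}"
    hence "\<rho> t = Some i" by simp
    thus "t \<in> {t. \<phi> t = Some i}" using \<rho>cases[of t i] sig[of t i] that CsL by (auto simp: J2_def)
  next
    fix t assume "t \<in> {t. \<phi> t = Some i}"
    thus "t \<in> {t. \<rho> t = Some i}" using \<phi>u[of t i] F3[of t i] that by (auto simp: \<rho>_def)
  qed
  have J\<rho>n: "J\<rho> \<subseteq> {1..n}" using Jn J2n by (auto simp: J\<rho>_def)
  have isr: "is_sched n p r d J\<rho> \<rho>"
    unfolding is_sched_def
  proof (intro conjI allI impI ballI)
    show "J\<rho> \<subseteq> {1..n}" using J\<rho>n .
  next
    fix t i assume a: "\<rho> t = Some i"
    show "i \<in> J\<rho>" "r i \<le> t" "t < d i" using \<rho>cases[OF a] sig[of t i] \<phi>u[of t i] by (auto simp: J\<rho>_def)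
  next
    fix i assume "i \<in> J\<rho>"
    thus "card {t. \<rho> t = Some i} = p i"
      using slotsJ slotsJ2 validC[OF v] validC[OF \<phi>v] p'eq by (auto simp: J\<rho>_def)
  next
    fix t j0 i assume a: "\<rho> t = Some j0" "i \<in> J\<rho>" "r i \<le> t \<and> card {u. u < t \<and> \<rho> u = Some i} < p i"
    show "d j0 \<le> d i"
    proof (cases "t < r l")
      case True
      hence st: "\<sigma> t = Some j0" using a(1) by (simp add: \<rho>_def)
      have iJ: "i \<in> J" "i \<noteq> k" using a(2,3) True by (auto simp: J\<rho>_def J2_def)
      have "{u. u < t \<and> \<rho> u = Some i} = {u. u < t \<and> \<sigma> u = Some i}" using True by (auto simp: \<rho>_def)
      hence "r' i \<le> t \<and> card {u. u < t \<and> \<sigma> u = Some i} < p' i" using a(3) r'eq[OF iJ(2)] p'eq[OF iJ(2)] by simp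
      thus ?thesis using sk'(1) st iJ unfolding is_sched_def by blast
    next
      case False
      hence tC: "r l \<le> t" "t < C" "\<phi> t = Some j0" using \<rho>cases[OF a(1)] by auto
      show ?thesis
      proof (cases "i \<in> J \<and> i \<noteq> k")
        case True
        have lt: "u < t" if "\<sigma> u = Some i" for u
        proof -
          have "u < C\<sigma>" using sig[OF that] by simp
          thus ?thesis using CsL tC by linarith
        qed
        have "{u. u < t \<and> \<rho> u = Some i} = {u. \<sigma> u = Some i}"
          using slotsJ[of i] True lt by auto
        hence False using a(3) validC[OF v] True p'eq by simp
        thus ?thesis ..
      next
        case False
        hence iJ2: "i \<in> J2" "r i < C" using a(2) by (auto simp: J\<rho>_def)
        have eq: "{u. u < t \<and> \<rho> u = Some i} = {u. u < t \<and> \<phi> u = Some i}" using slotsJ2[OF iJ2] by auto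
        have fin: "finite {u. \<phi> u = Some i}" using fin_slots[OF \<phi>v] .
        have "card {u. u < t \<and> \<phi> u = Some i} < card {u. \<phi> u = Some i}"
          using a(3) eq validC[OF \<phi>v iJ2(1)] by simp
        have "\<not> {u. \<phi> u = Some i} \<subseteq> {u. u < t \<and> \<phi> u = Some i}"
        proof
          assume "{u. \<phi> u = Some i} \<subseteq> {u. u < t \<and> \<phi> u = Some i}"
          hence "card {u. \<phi> u = Some i} \<le> card {u. u < t \<and> \<phi> u = Some i}"
            by (rule card_mono[rotated]) (rule finite_subset[OF _ fin], auto)
          thus False using \<open>card {u. u < t \<and> \<phi> u = Some i} < card {u. \<phi> u = Some i}\<close> by simp
        qed
        then obtain u where u: "\<phi> u = Some i" "\<not> u < t" by blast
        show ?thesis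
        proof (cases "u = t")
          case True thus ?thesis using u tC by simp
        next
          case False
          hence "t < u" using u by simp
          thus ?thesis using E[OF tC(3) u(1)] a(3) by simp
        qed
      qed
    qed
  qed
  have v\<rho>: "valid p r d J\<rho> \<rho>" using is_sched_valid[OF isr] .
  have fJ\<rho>: "finite J\<rho>" using J\<rho>n finite_subset by blast
  have fs\<rho>: "finite {t. \<rho> t \<noteq> None}" using finite_supp[OF v\<rho> fJ\<rho>] .
  have \<rho>C: "\<rho> t \<noteq> None \<Longrightarrow> t < C" for t using rlC by (auto simp: \<rho>_def split: if_splits)
  have Cm: "Cmax r s \<rho> = C"
  proof (rule Cmax_eq[OF fs\<rho>])
    show "\<rho> (C - 1) \<noteq> None" using C2[of "C - 1"] rlC by (auto simp: \<rho>_def)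
  qed (use rlC rl \<rho>C in auto)
  obtain ic where ic: "\<phi> (C - 1) = Some ic" using C2[of "C - 1"] rlC by fastforce
  have Cd: "C \<le> d (k - 1)"
  proof -
    have "C - 1 < d ic" "1 \<le> ic" "ic \<le> k - 1" using \<phi>u[OF ic] by auto
    moreover have "d ic \<le> d (k - 1)" using d_le[of ic "k - 1"] \<phi>u[OF ic] k by auto
    ultimately show ?thesis by simp
  qed
  have J\<rho>eq: "J\<rho> = {i. 1 \<le> i \<and> i \<le> k - 1 \<and> r s \<le> r i \<and> r i < C}"
  proof (intro set_eqI iffI)
    fix i assume "i \<in> J\<rho>"
    thus "i \<in> {i. 1 \<le> i \<and> i \<le> k - 1 \<and> r s \<le> r i \<and> r i < C}"
      using Jchar[of i] CsL rlC rl by (auto simp: J\<rho>_def J2_def)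
  next
    fix i assume a: "i \<in> {i. 1 \<le> i \<and> i \<le> k - 1 \<and> r s \<le> r i \<and> r i < C}"
    show "i \<in> J\<rho>"
    proof (cases "r i < C\<sigma>")
      case True thus ?thesis using a Jchar[of i] by (auto simp: J\<rho>_def)
    next
      case False
      hence "r l \<le> r i" using nomid[of i] a by auto
      thus ?thesis using a by (auto simp: J\<rho>_def J2_def)
    qed
  qed
  have skr: "sk_sched n p r d s (k - 1) J\<rho> \<rho>" unfolding sk_sched_def using isr Cm Cd J\<rho>eq by simp
  have gapsub: "{u. r s \<le> u \<and> u < C \<and> \<rho> u = None \<and> (u = r s \<or> \<rho> (u - 1) \<noteq> None)}
      \<subseteq> {u. r s \<le> u \<and> u < r l \<and> \<sigma> u = None \<and> (u = r s \<or> \<sigma> (u - 1) \<noteq> None)}"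
  proof
    fix u assume a: "u \<in> {u. r s \<le> u \<and> u < C \<and> \<rho> u = None \<and> (u = r s \<or> \<rho> (u - 1) \<noteq> None)}"
    have ur: "u < r l"
    proof (rule ccontr)
      assume "\<not> u < r l"
      thus False using a C2[of u] by (auto simp: \<rho>_def)
    qed
    thus "u \<in> {u. r s \<le> u \<and> u < r l \<and> \<sigma> u = None \<and> (u = r s \<or> \<sigma> (u - 1) \<noteq> None)}"
      using a by (auto simp: \<rho>_def split: if_splits)
  qed
  have "ngaps \<rho> (r s) (Cmax r s \<rho>) \<le> ngaps \<sigma> (r s) (r l)"
    unfolding ngaps_def Cm by (rule card_mono[OF _ gapsub]) auto
  hence ng: "ngaps \<rho> (r s) (Cmax r s \<rho>) \<le> g" using gp by simp
  have "ereal (real (Cmax r s \<rho>)) \<le> U n p r d s (k - 1) g"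
    unfolding U_def by (rule Sup_upper) (use skr ng in blast)
  moreover have "ereal (real (r l)) \<le> ereal (real (Cmax r s \<rho>))" using Cm rlC by simp
  ultimately show ?thesis by (rule order_trans[rotated])
qed

end


lemma enat_Inf_le: assumes "Inf S \<le> enat m" shows "\<exists>x\<in>S. x \<le> enat m"
proof -
  have "S \<noteq> {}" using assms by (auto simp: Inf_enat_def)
  then obtain x where "x \<in> S" by blast
  hence "Inf S \<in> S" unfolding Inf_enat_def using \<open>S \<noteq> {}\<close> by (auto intro: LeastI)
  thus ?thesis using assms by blast
qed

context inst begin

lemma hall:
  assumes Ced: "\<forall>j. 1 \<le> j \<and> j < k \<and> r s \<le> r j \<and> r j < r l \<longrightarrow> Cedf n p r d s j \<le> enat (r l)"
    and k: "k \<le> n"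
    and a: "r s \<le> a"
  shows "sum p {q. 1 \<le> q \<and> q \<le> k - 1 \<and> r s \<le> r q \<and> r q < r l \<and> a \<le> r q} \<le> r l - a"
  using a
proof (induction "r l - a" arbitrary: a rule: less_induct)
  case less
  define X where "X = {q. 1 \<le> q \<and> q \<le> k - 1 \<and> r s \<le> r q \<and> r q < r l \<and> a \<le> r q}"
  have finX: "finite X" unfolding X_def by (rule finite_subset[of _ "{..k}"]) auto
  show ?case
  proof (cases "X = {}")
    case True
    have "sum p X = 0" using True by simp
    from this[unfolded X_def] show ?thesis by simp
  next
    case False
    define j where "j = Max X"
    have jX: "j \<in> X" using Max_in[OF finX False] j_def by simp
    have jmax: "q \<le> j" if "q \<in> X" for q using Max_ge[OF finX that] j_def by simp
    have jp: "1 \<le> j" "j < k" "r s \<le> r j" "r j < r l" "a \<le> r j" using jX unfolding X_def by auto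
    have "Cedf n p r d s j \<le> enat (r l)" using Ced jp by blast
    hence "Inf {enat (Suc (Max {t. \<sigma> t = Some j})) |J \<sigma>. sk_sched n p r d s j J \<sigma> \<and> j \<in> J} \<le> enat (r l)"
      unfolding Cedf_def .
    from enat_Inf_le[OF this] obtain x where "x \<in> {enat (Suc (Max {t. \<sigma> t = Some j})) |J \<sigma>. sk_sched n p r d s j J \<sigma> \<and> j \<in> J}"
      "x \<le> enat (r l)" by blast
    then obtain J \<rho> where skr: "sk_sched n p r d s j J \<rho>" "j \<in> J" and cl: "Suc (Max {t. \<rho> t = Some j}) \<le> r l"
      by auto
    define m where "m = Max {t. \<rho> t = Some j}"
    define c where "c = Suc m"
    have isr: "is_sched n p r d J \<rho>" and Jeq: "J = {i. 1 \<le> i \<and> i \<le> j \<and> r s \<le> r i \<and> r i < Cmax r s \<rho>}"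
      using skr unfolding sk_sched_def by blast+
    have vr: "valid p r d J \<rho>" using is_sched_valid[OF isr] .
    have Jn: "J \<subseteq> {1..n}" using isr by (simp add: is_sched_def)
    have finJ: "finite J" using Jn finite_subset by blast
    have fs: "finite {t. \<rho> t \<noteq> None}" using finite_supp[OF vr finJ] .
    have fj: "finite {t. \<rho> t = Some j}" using fin_slots[OF vr] .
    have nej: "{t. \<rho> t = Some j} \<noteq> {}" using exists_unit[OF vr skr(2)] p_pos Jn skr(2) by auto
    have \<rho>m: "\<rho> m = Some j" using Max_in[OF fj nej] m_def by simp
    have rjm: "r j \<le> m" using validD[OF vr \<rho>m] by simp
    have cCm: "c \<le> Cmax r s \<rho>" using Cmax_ge[OF fs, of m] \<rho>m c_def by simp
    have ac: "a < c" using rjm jp c_def by simp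
    have cl': "c \<le> r l" using cl m_def c_def by simp
    define X1 where "X1 = {q \<in> X. r q < c}"
    define X2 where "X2 = {q. 1 \<le> q \<and> q \<le> k - 1 \<and> r s \<le> r q \<and> r q < r l \<and> c \<le> r q}"
    have XU: "X = X1 \<union> X2" using ac unfolding X_def X1_def X2_def by auto
    have XD: "X1 \<inter> X2 = {}" unfolding X1_def X2_def by auto
    have fin12: "finite X1" "finite X2" using finX XU by auto
    have sX: "sum p X = sum p X1 + sum p X2" using XU XD fin12 by (simp add: sum.union_disjoint)
    have s2: "sum p X2 \<le> r l - c"
    proof -
      have h1: "r l - c < r l - a" using ac cl' jp by linarith
      have h2: "r s \<le> c" using less.prems ac by linarith
      show ?thesis unfolding X2_def using less.hyps[OF h1 h2] .
    qed
    have X1J: "X1 \<subseteq> J"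
    proof
      fix q assume q: "q \<in> X1"
      hence "q \<le> j" using jmax X1_def by auto
      thus "q \<in> J" using q cCm unfolding Jeq X1_def X_def by auto
    qed
    have usub: "units \<rho> X1 \<subseteq> {a..<c}"
    proof
      fix t assume "t \<in> units \<rho> X1"
      then obtain q where q: "q \<in> X1" "\<rho> t = Some q" unfolding units_def by blast
      have qX: "a \<le> r q" "r q < c" "1 \<le> q" "q \<le> j" using q(1) jmax unfolding X1_def X_def by auto
      have rq: "r q \<le> t" using validD[OF vr q(2)] by blast
      have "t < c"
      proof (cases "q = j")
        case True
        have "t \<in> {t. \<rho> t = Some j}" using q True by simp
        hence "t \<le> m" using Max_ge[OF fj] m_def by blast
        thus ?thesis using c_def by simp
      next
        case False
        show ?thesis
        proof (rule ccontr)
          assume "\<not> t < c" hence mt: "m < t" using c_def by simp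
          have qJ: "q \<in> J" using X1J q by blast
          have qj: "q < j" using False qX by simp
          have sub: "{u. u < m \<and> \<rho> u = Some q} \<subset> {u. \<rho> u = Some q}"
          proof (rule psubsetI)
            show "{u. u < m \<and> \<rho> u = Some q} \<subseteq> {u. \<rho> u = Some q}" by blast
            have "t \<in> {u. \<rho> u = Some q}" "t \<notin> {u. u < m \<and> \<rho> u = Some q}" using q mt by auto
            thus "{u. u < m \<and> \<rho> u = Some q} \<noteq> {u. \<rho> u = Some q}" by blast
          qed
          have "card {u. u < m \<and> \<rho> u = Some q} < card {u. \<rho> u = Some q}"
            by (rule psubset_card_mono[OF fin_slots[OF vr] sub])
          hence c1: "card {u. u < m \<and> \<rho> u = Some q} < p q" using validC[OF vr qJ] by simp
          have c2: "r q \<le> m" using qX c_def by simp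
          have "d j \<le> d q" using isr \<rho>m qJ c1 c2 unfolding is_sched_def by blast
          moreover have "d q < d j"
          proof -
            have "j \<le> n" using jp k by simp
            thus ?thesis using d_mono qj qX by blast
          qed
          ultimately show False by simp
        qed
      qed
      thus "t \<in> {a..<c}" using qX rq by simp
    qed
    have "sum p X1 = card (units \<rho> X1)" using card_units[OF vr fin12(1) X1J] by simp
    also have "\<dots> \<le> c - a" using card_mono[OF _ usub] by simp
    finally have "sum p X1 \<le> c - a" .
    hence "sum p X \<le> r l - a" using sX s2 ac cl' by linarith
    thus ?thesis using X_def by simp
  qed
qed

end


lemma ivt_nat:
  fixes f :: "nat \<Rightarrow> nat"
  assumes "a \<le> b" "c \<le> f a" "f b \<le> c" "\<And>x. f x \<le> Suc (f (Suc x))"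
  shows "\<exists>\<theta>. a \<le> \<theta> \<and> \<theta> \<le> b \<and> f \<theta> = c"
  using assms(1,2)
proof (induction "b - a" arbitrary: a rule: less_induct)
  case less
  show ?case
  proof (cases "f a = c")
    case True thus ?thesis using less.prems by auto
  next
    case False
    hence "c < f a" using less.prems by simp
    hence "a \<noteq> b" using assms(3) by auto
    hence ab: "a < b" using less.prems by simp
    have "c \<le> f (Suc a)" using \<open>c < f a\<close> assms(4)[of a] by simp
    moreover have "b - Suc a < b - a" using ab by simp
    ultimately obtain \<theta> where "Suc a \<le> \<theta> \<and> \<theta> \<le> b \<and> f \<theta> = c" using less.hyps[of "Suc a"] ab by auto
    thus ?thesis by (intro exI[of _ \<theta>]) auto
  qed
qed

context inst begin

lemma U_witness:
  assumes "ereal (real m) \<le> U n p r d s k' g"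
  shows "\<exists>J \<sigma>. sk_sched n p r d s k' J \<sigma> \<and> ngaps \<sigma> (r s) (Cmax r s \<sigma>) \<le> g \<and> m \<le> Cmax r s \<sigma>"
proof (rule ccontr)
  assume nex: "\<not> ?thesis"
  have "U n p r d s k' g \<le> ereal (real m - 1)"
    unfolding U_def
  proof (rule Sup_least)
    fix x assume "x \<in> {ereal (real (Cmax r s \<sigma>)) |J \<sigma>. sk_sched n p r d s k' J \<sigma> \<and> ngaps \<sigma> (r s) (Cmax r s \<sigma>) \<le> g}"
    then obtain J \<sigma> where x: "x = ereal (real (Cmax r s \<sigma>))" "sk_sched n p r d s k' J \<sigma>" "ngaps \<sigma> (r s) (Cmax r s \<sigma>) \<le> g"
      by blast
    hence "Cmax r s \<sigma> < m" using nex by (meson not_le)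
    hence "real (Cmax r s \<sigma>) \<le> real m - 1" by linarith
    thus "x \<le> ereal (real m - 1)" using x(1) by simp
  qed
  hence "ereal (real m) \<le> ereal (real m - 1)" using assms by (rule order_trans[rotated])
  thus False by simp
qed

end


context inst begin

lemma P0_from:
  assumes Ced: "\<forall>j. 1 \<le> j \<and> j < k \<and> r s \<le> r j \<and> r j < r l \<longrightarrow> Cedf n p r d s j \<le> enat (r l)"
    and Uge: "ereal (real (r l)) \<le> U n p r d s (k - 1) g"
    and k: "k \<le> n" and l: "1 \<le> l" "l \<le> k - 1" and rl: "r s \<le> r l"
  shows "\<exists>J \<tau>. skp_sched n p r d s k 0 J \<tau> \<and> prevr r (k - 1) (r l) < ereal (real (Cmax r s \<tau>))
           \<and> Cmax r s \<tau> \<le> r l \<and> ngaps \<tau> (r s) (r l) \<le> g"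
proof -
  obtain J\<sigma> \<sigma> where sks: "sk_sched n p r d s (k - 1) J\<sigma> \<sigma>" and gs: "ngaps \<sigma> (r s) (Cmax r s \<sigma>) \<le> g"
    and Cs: "r l \<le> Cmax r s \<sigma>" using U_witness[OF Uge] by blast
  define C\<sigma> where "C\<sigma> = Cmax r s \<sigma>"
  have iss: "is_sched n p r d J\<sigma> \<sigma>" and J\<sigma>eq: "J\<sigma> = {i. 1 \<le> i \<and> i \<le> k - 1 \<and> r s \<le> r i \<and> r i < C\<sigma>}"
    using sks unfolding sk_sched_def C\<sigma>_def by blast+
  have vs: "valid p r d J\<sigma> \<sigma>" using is_sched_valid[OF iss] .
  have J\<sigma>n: "J\<sigma> \<subseteq> {1..n}" using iss by (simp add: is_sched_def)
  have finJ\<sigma>: "finite J\<sigma>" using J\<sigma>n finite_subset by blast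
  have fs\<sigma>: "finite {t. \<sigma> t \<noteq> None}" using finite_supp[OF vs finJ\<sigma>] .
  define Q where "Q = {i. 1 \<le> i \<and> i \<le> k - 1 \<and> r s \<le> r i \<and> r i < r l}"
  have Qn: "Q \<subseteq> {1..n}" using k by (auto simp: Q_def)
  have finQ: "finite Q" using Qn finite_subset by blast
  have QJ: "Q \<subseteq> J\<sigma>" using Cs unfolding Q_def J\<sigma>eq C\<sigma>_def by auto
  have kgt: "1 \<le> k - 1" using l by simp
  have sig: "i \<in> J\<sigma> \<and> r i \<le> t \<and> t < d i \<and> r s \<le> r i \<and> 1 \<le> i \<and> i \<le> k - 1" if "\<sigma> t = Some i" for t i
    using validD[OF vs that] J\<sigma>eq by auto
  have sQ: "i \<in> Q" if "\<sigma> t = Some i" "t < r l" for t i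
    using sig[OF that(1)] that(2) unfolding Q_def by auto
  define B0 where "B0 = {t. t < r l \<and> \<sigma> t \<noteq> None}"
  define Car where "Car = units \<sigma> Q \<inter> {t. r l \<le> t}"
  define c where "c = card Car"
  have uQ: "units \<sigma> Q = B0 \<union> Car"
  proof (intro set_eqI iffI)
    fix t assume "t \<in> units \<sigma> Q" thus "t \<in> B0 \<union> Car" unfolding B0_def Car_def units_def by auto
  next
    fix t assume "t \<in> B0 \<union> Car"
    thus "t \<in> units \<sigma> Q" unfolding B0_def Car_def units_def using sQ by auto
  qed
  have finB0: "finite B0" unfolding B0_def by (rule finite_subset[of _ "{..<r l}"]) auto
  have finuQ: "finite (units \<sigma> Q)" using finite_units[OF vs finQ] .
  have finCar: "finite Car" using finuQ Car_def by simp
  have dis0: "B0 \<inter> Car = {}" unfolding B0_def Car_def by auto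
  have WQ: "sum p Q = card B0 + c"
    using card_units[OF vs finQ QJ] uQ card_Un_disjoint[OF finB0 finCar dis0] c_def by simp
  define I where "I = {t. r s \<le> t \<and> t < r l \<and> \<sigma> t = None}"
  have B0sub: "B0 \<subseteq> {r s..<r l}"
  proof
    fix t assume "t \<in> B0"
    then obtain i where "\<sigma> t = Some i" "t < r l" unfolding B0_def by auto
    thus "t \<in> {r s..<r l}" using sig by fastforce
  qed
  have BIu: "B0 \<union> I = {r s..<r l}" using B0sub unfolding I_def B0_def by auto
  have BId: "B0 \<inter> I = {}" unfolding I_def B0_def by auto
  have finI: "finite I" unfolding I_def by (rule finite_subset[of _ "{..<r l}"]) auto
  have cBI: "card B0 + card I = r l - r s" using card_Un_disjoint[OF finB0 finI BId] BIu by simp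
  have hall_at: "sum p {q \<in> Q. b \<le> r q} \<le> r l - b" if "r s \<le> b" for b
  proof -
    have "{q \<in> Q. b \<le> r q} = {q. 1 \<le> q \<and> q \<le> k - 1 \<and> r s \<le> r q \<and> r q < r l \<and> b \<le> r q}"
      unfolding Q_def by auto
    thus ?thesis using hall[OF Ced k that] by simp
  qed
  have "{q \<in> Q. r s \<le> r q} = Q" unfolding Q_def by auto
  hence "sum p Q \<le> r l - r s" using hall_at[of "r s"] by simp
  hence cI: "c \<le> card I" using WQ cBI by simp
  define f where "f = (\<lambda>\<theta>. card (I \<inter> {\<theta>..<r l}))"
  have f1: "f (r s) = card I" unfolding f_def I_def by (intro arg_cong[of _ _ card]) auto
  have f2: "f (r l) = 0" unfolding f_def by simp
  have f3: "f x \<le> Suc (f (Suc x))" for x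
  proof -
    have "I \<inter> {x..<r l} \<subseteq> insert x (I \<inter> {Suc x..<r l})" by auto
    hence "card (I \<inter> {x..<r l}) \<le> card (insert x (I \<inter> {Suc x..<r l}))" by (rule card_mono[rotated]) simp
    also have "\<dots> \<le> Suc (card (I \<inter> {Suc x..<r l}))" by (simp add: card_insert_le_m1)
    finally show ?thesis unfolding f_def .
  qed
  obtain \<theta> where th: "r s \<le> \<theta>" "\<theta> \<le> r l" "card (I \<inter> {\<theta>..<r l}) = c"
    using ivt_nat[of "r s" "r l" c f, OF rl] f1 f2 f3 cI unfolding f_def by auto
  define B where "B = B0 \<union> {\<theta>..<r l}"
  have Bsplit: "B = B0 \<union> (I \<inter> {\<theta>..<r l})" using BIu th unfolding B_def by auto
  have dis1: "B0 \<inter> (I \<inter> {\<theta>..<r l}) = {}" using BId by auto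
  have finB: "finite B" unfolding B_def using finB0 by simp
  have cardB: "card B = sum p Q"
    using card_Un_disjoint[OF finB0 _ dis1] finI Bsplit th WQ by simp
  have Bsub: "B \<subseteq> {r s..<r l}" using B0sub th unfolding B_def by auto
  have hallB: "sum p {q \<in> Q. b \<le> r q} \<le> card (B \<inter> {b..<r l})" if b: "r s \<le> b" "b \<le> r l" for b
  proof (cases "\<theta> \<le> b")
    case True
    hence "B \<inter> {b..<r l} = {b..<r l}" unfolding B_def by auto
    thus ?thesis using hall_at[OF b(1)] by simp
  next
    case False
    define Xb where "Xb = {q \<in> Q. b \<le> r q}"
    have XbJ: "Xb \<subseteq> J\<sigma>" using QJ Xb_def by auto
    have finXb: "finite Xb" using finQ Xb_def by simp
    have "sum p Xb = card (units \<sigma> Xb)" using card_units[OF vs finXb XbJ] by simp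
    also have "units \<sigma> Xb \<subseteq> (B0 \<inter> {b..<r l}) \<union> Car"
    proof
      fix t assume "t \<in> units \<sigma> Xb"
      then obtain q where q: "q \<in> Xb" "\<sigma> t = Some q" unfolding units_def by blast
      have "b \<le> t" using sig[OF q(2)] q(1) Xb_def by auto
      thus "t \<in> (B0 \<inter> {b..<r l}) \<union> Car" using q Xb_def unfolding B0_def Car_def units_def by auto
    qed
    hence "card (units \<sigma> Xb) \<le> card ((B0 \<inter> {b..<r l}) \<union> Car)" by (rule card_mono[rotated]) (use finB0 finCar in auto)
    also have "\<dots> \<le> card (B0 \<inter> {b..<r l}) + c" using card_Un_le c_def by blast
    also have "\<dots> = card ((B0 \<inter> {b..<r l}) \<union> (I \<inter> {\<theta>..<r l}))"
    proof -
      have "B0 \<inter> {b..<r l} \<inter> (I \<inter> {\<theta>..<r l}) = {}" using BId by auto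
      hence "card ((B0 \<inter> {b..<r l}) \<union> (I \<inter> {\<theta>..<r l})) = card (B0 \<inter> {b..<r l}) + card (I \<inter> {\<theta>..<r l})"
        using card_Un_disjoint[of "B0 \<inter> {b..<r l}" "I \<inter> {\<theta>..<r l}"] finB0 finI by auto
      thus ?thesis using th by simp
    qed
    also have "\<dots> \<le> card (B \<inter> {b..<r l})"
      by (rule card_mono) (use finB False in \<open>auto simp: Bsplit\<close>)
    finally show ?thesis using Xb_def by simp
  qed
  define \<sigma>Q where "\<sigma>Q = (\<lambda>t. case \<sigma> t of None \<Rightarrow> None | Some i \<Rightarrow> if i \<in> Q then Some i else None)"
  have v\<sigma>Q: "valid p r d Q \<sigma>Q"
  proof -
    have "{t. \<sigma>Q t = Some j} = {t. \<sigma> t = Some j}" if "j \<in> Q" for j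
      using that by (auto simp: \<sigma>Q_def split: option.splits)
    thus ?thesis using vs QJ unfolding valid_def \<sigma>Q_def by (auto split: option.splits if_splits)
  qed
  define S where "S = (\<lambda>\<pi>. valid p r d Q \<pi> \<and> (\<forall>t. t < r l \<longrightarrow> \<pi> t \<noteq> None \<longrightarrow> t \<in> B))"
  have S\<sigma>Q: "S \<sigma>Q" unfolding S_def
  proof (intro conjI allI impI v\<sigma>Q)
    fix t assume "t < r l" "\<sigma>Q t \<noteq> None"
    thus "t \<in> B" unfolding B_def B0_def \<sigma>Q_def by (auto split: option.splits)
  qed
  obtain \<pi> where S\<pi>: "S \<pi>" and \<pi>min: "\<And>\<pi>'. S \<pi>' \<Longrightarrow> phi n H \<pi> \<le> phi n H \<pi>'"
    using phi_min_exists[of S, OF S\<sigma>Q] by blast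
  have v\<pi>: "valid p r d Q \<pi>" and \<pi>B: "\<And>t. t < r l \<Longrightarrow> \<pi> t \<noteq> None \<Longrightarrow> t \<in> B" using S\<pi> unfolding S_def by auto
  have \<pi>u: "i \<in> Q \<and> r i \<le> t \<and> t < d i" if "\<pi> t = Some i" for t i using validD[OF v\<pi> that] .
  have L: False if "\<pi> t = None" "t \<in> B" "\<pi> u = Some i" "r i \<le> t" "t < u" for t u i
  proof -
    have "u < H" using unit_lt_H[OF v\<pi> Qn that(3)] .
    moreover have "i \<le> n" using \<pi>u[OF that(3)] Qn by auto
    ultimately have "phi n H (\<pi>(t := Some i, u := None)) < phi n H \<pi>" using move_phi that by blast
    moreover have "S (\<pi>(t := Some i, u := None))"
      unfolding S_def using move_valid[OF v\<pi> that(3,1,5,4)] \<pi>B that(2) by auto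
    ultimately show False using \<pi>min by fastforce
  qed
  have E: "d j \<le> d i" if "\<pi> t = Some j" "\<pi> u = Some i" "t < u" "r i \<le> t" for t u i j
  proof (rule ccontr)
    assume "\<not> d j \<le> d i" hence dd: "d i < d j" by simp
    have ij: "i \<in> {1..n}" "j \<in> {1..n}" using \<pi>u[OF that(1)] \<pi>u[OF that(2)] Qn by auto
    have "i < j" using d_lt_idx[OF ij dd] .
    moreover have "u < H" using unit_lt_H[OF v\<pi> Qn that(2)] .
    ultimately have "phi n H (\<pi>(t := Some i, u := Some j)) < phi n H \<pi>" using swap_phi that ij by auto
    moreover have "S (\<pi>(t := Some i, u := Some j))"
      unfolding S_def using swap_valid[OF v\<pi> that(1,2,3,4) dd] \<pi>B that by auto
    ultimately show False using \<pi>min by fastforce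
  qed
  have finu\<pi>: "finite (units \<pi> Q)" using finite_units[OF v\<pi> finQ] .
  have cu\<pi>: "card (units \<pi> Q) = card B" using card_units[OF v\<pi> finQ] cardB by simp
  have nocarry: "w < r l" if w: "\<pi> w = Some j" for w j
  proof (rule ccontr)
    assume nw: "\<not> w < r l"
    define busy where "busy = {t. t < r l \<and> \<pi> t \<noteq> None}"
    define Cp where "Cp = units \<pi> Q \<inter> {t. r l \<le> t}"
    have busyB: "busy \<subseteq> B" using \<pi>B busy_def by auto
    have finbusy: "finite busy" using finB busyB finite_subset by blast
    have finCp: "finite Cp" using finu\<pi> Cp_def by simp
    have uu: "units \<pi> Q = busy \<union> Cp" unfolding busy_def Cp_def units_def using \<pi>u by auto
    have "busy \<inter> Cp = {}" unfolding busy_def Cp_def by auto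
    hence "card busy + card Cp = card B" using card_Un_disjoint[OF finbusy finCp] uu cu\<pi> by simp
    moreover have "w \<in> Cp" using w nw \<pi>u[OF w] unfolding Cp_def units_def by auto
    hence "card Cp \<ge> 1" using finCp by (metis One_nat_def Suc_leI card_gt_0_iff empty_iff)
    ultimately have lt: "card busy < card B" by simp
    have ne: "B - busy \<noteq> {}"
    proof
      assume "B - busy = {}" hence "B \<subseteq> busy" by blast
      hence "card B \<le> card busy" using card_mono[OF finbusy] by blast
      thus False using lt by simp
    qed
    define f0 where "f0 = Max (B - busy)"
    have f0in: "f0 \<in> B - busy" using Max_in[OF _ ne] finB f0_def by simp
    have f0max: "t \<le> f0" if "t \<in> B - busy" for t using Max_ge[of "B - busy" t] finB that f0_def by simp
    have f0l: "f0 < r l" "r s \<le> f0" using f0in Bsub by auto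
    have \<pi>f0: "\<pi> f0 = None" using f0in f0l unfolding busy_def by auto
    define bb where "bb = Suc f0"
    define Xb where "Xb = {q \<in> Q. bb \<le> r q}"
    have good: "bb \<le> r i" if "\<pi> t = Some i" "f0 < t" for t i
    proof (rule ccontr)
      assume "\<not> bb \<le> r i" hence "r i \<le> f0" using bb_def by simp
      thus False using L[OF \<pi>f0 _ that(1)] f0in that(2) by auto
    qed
    have sub: "insert w (B \<inter> {bb..<r l}) \<subseteq> units \<pi> Xb"
    proof
      fix t assume t: "t \<in> insert w (B \<inter> {bb..<r l})"
      show "t \<in> units \<pi> Xb"
      proof (cases "t = w")
        case True
        have "f0 < w" using f0l nw by simp
        thus ?thesis using True w good[OF w] \<pi>u[OF w] unfolding units_def Xb_def by auto
      next
        case False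
        hence tB: "t \<in> B" "bb \<le> t" "t < r l" using t by auto
        have "t \<notin> B - busy" using f0max tB bb_def by fastforce
        hence "t \<in> busy" using tB by blast
        then obtain i where i: "\<pi> t = Some i" unfolding busy_def by auto
        have "f0 < t" using tB bb_def by simp
        thus ?thesis using i good[OF i] \<pi>u[OF i] unfolding units_def Xb_def by auto
      qed
    qed
    have finXb: "finite Xb" using finQ Xb_def by simp
    have XbQ: "Xb \<subseteq> Q" using Xb_def by auto
    have "card (insert w (B \<inter> {bb..<r l})) = Suc (card (B \<inter> {bb..<r l}))"
      using finB nw by (simp add: card_insert_disjoint)
    moreover have "card (insert w (B \<inter> {bb..<r l})) \<le> card (units \<pi> Xb)"
      by (rule card_mono[OF finite_units[OF v\<pi> finXb] sub])
    moreover have "card (units \<pi> Xb) = sum p Xb" using card_units[OF v\<pi> finXb XbQ] .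
    moreover have "sum p Xb \<le> card (B \<inter> {bb..<r l})" using hallB[of bb] f0l bb_def Xb_def by simp
    ultimately show False by simp
  qed
  have supp: "{t. \<pi> t \<noteq> None} = B"
  proof -
    have sub: "{t. \<pi> t \<noteq> None} \<subseteq> B" using \<pi>B nocarry by blast
    have "{t. \<pi> t \<noteq> None} = units \<pi> Q" unfolding units_def using \<pi>u by auto
    hence "card {t. \<pi> t \<noteq> None} = card B" using cu\<pi> by simp
    thus ?thesis using card_subset_eq[OF finB sub] by simp
  qed
  have fs\<pi>: "finite {t. \<pi> t \<noteq> None}" using supp finB by simp
  define C\<tau> where "C\<tau> = Cmax r s \<pi>"
  have C\<tau>l: "C\<tau> \<le> r l" unfolding C\<tau>_def
    by (rule Cmax_le[of r s "r l"]) (use nocarry rl in \<open>auto simp: Suc_le_eq\<close>)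
  have qC: "r q < C\<tau>" if qQ: "q \<in> Q" for q
  proof -
    obtain t where t: "\<pi> t = Some q" using exists_unit[OF v\<pi> qQ] p_pos Qn qQ by auto
    have "Suc t \<le> C\<tau>" unfolding C\<tau>_def using Cmax_ge[OF fs\<pi>] t by simp
    thus ?thesis using \<pi>u[OF t] by simp
  qed
  define p' where "p' = p(k := 0)"
  define r' where "r' = r(k := max (r s) (r k))"
  have r's: "r' s = r s" by (simp add: r'_def)
  have CC: "Cmax r' s \<pi> = C\<tau>" unfolding r'_def C\<tau>_def by (rule Cmax_upd)
  define J' where "J' = {i. 1 \<le> i \<and> i \<le> k \<and> r s \<le> r' i \<and> r' i < C\<tau>}"
  have r'eq: "r' i = r i" if "i \<noteq> k" for i using that by (simp add: r'_def)
  have p'eq: "p' i = p i" if "i \<noteq> k" for i using that by (simp add: p'_def)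
  have kQ: "k \<notin> Q" using kgt unfolding Q_def by auto
  have J'Q: "i \<in> Q" if "i \<in> J'" "i \<noteq> k" for i
    using that r'eq[OF that(2)] C\<tau>l unfolding J'_def Q_def by auto
  have QJ': "Q \<subseteq> J'" using qC r'eq kQ unfolding J'_def Q_def by auto
  have ist: "is_sched n p' r' d J' \<pi>"
    unfolding is_sched_def
  proof (intro conjI allI impI ballI)
    show "J' \<subseteq> {1..n}" using k unfolding J'_def by auto
  next
    fix t i assume a: "\<pi> t = Some i"
    have "i \<in> Q" "i \<noteq> k" using \<pi>u[OF a] kQ by auto
    thus "i \<in> J'" "r' i \<le> t" "t < d i" using QJ' \<pi>u[OF a] r'eq by auto
  next
    fix i assume a: "i \<in> J'"
    show "card {t. \<pi> t = Some i} = p' i"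
    proof (cases "i = k")
      case True
      have "{t. \<pi> t = Some i} = {}" using \<pi>u kQ True by blast
      thus ?thesis using True p'_def by simp
    next
      case False thus ?thesis using validC[OF v\<pi> J'Q[OF a False]] p'eq by simp
    qed
  next
    fix t j0 i assume a: "\<pi> t = Some j0" "i \<in> J'" "r' i \<le> t \<and> card {u. u < t \<and> \<pi> u = Some i} < p' i"
    show "d j0 \<le> d i"
    proof (cases "i = k")
      case True thus ?thesis using a(3) p'_def by simp
    next
      case False
      have iQ: "i \<in> Q" using J'Q[OF a(2) False] .
      have fin: "finite {u. \<pi> u = Some i}" using fin_slots[OF v\<pi>] .
      have clt: "card {u. u < t \<and> \<pi> u = Some i} < card {u. \<pi> u = Some i}"
        using a(3) validC[OF v\<pi> iQ] p'eq[OF False] by simp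
      have "\<not> {u. \<pi> u = Some i} \<subseteq> {u. u < t \<and> \<pi> u = Some i}"
      proof
        assume "{u. \<pi> u = Some i} \<subseteq> {u. u < t \<and> \<pi> u = Some i}"
        hence "card {u. \<pi> u = Some i} \<le> card {u. u < t \<and> \<pi> u = Some i}"
          by (rule card_mono[rotated]) (rule finite_subset[OF _ fin], auto)
        thus False using clt by simp
      qed
      then obtain u where u: "\<pi> u = Some i" "\<not> u < t" by blast
      show ?thesis
      proof (cases "u = t")
        case True thus ?thesis using u a(1) by simp
      next
        case False
        hence "t < u" using u by simp
        thus ?thesis using E[OF a(1) u(1)] a(3) r'eq[of i] \<open>i \<noteq> k\<close> by simp
      qed
    qed
  qed
  have Cdk: "C\<tau> \<le> d k"
  proof -
    have "r l < d l" using r_lt_d l k by simp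
    moreover have "d l \<le> d k" using d_le[of l k] l k by simp
    ultimately show ?thesis using C\<tau>l by simp
  qed
  have skp: "skp_sched n p r d s k 0 J' \<pi>"
    unfolding skp_sched_def sk_sched_def
    using ist Cdk CC r's unfolding p'_def r'_def J'_def by simp
  have pv: "prevr r (k - 1) (r l) < ereal (real C\<tau>)"
  proof -
    have "prevr r (k - 1) (r l) \<le> ereal (real C\<tau> - 1)"
      unfolding prevr_def
    proof (rule Sup_least)
      fix x assume "x \<in> {ereal (real (r j)) |j. 1 \<le> j \<and> j \<le> k - 1 \<and> r j < r l}"
      then obtain j where j: "x = ereal (real (r j))" "1 \<le> j" "j \<le> k - 1" "r j < r l" by blast
      have "r j < C\<tau>"
      proof (cases "r s \<le> r j")
        case True thus ?thesis using qC[of j] j unfolding Q_def by simp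
      next
        case False thus ?thesis using Cmax_ge_rs[of r s \<pi>] C\<tau>_def by simp
      qed
      hence "real (r j) \<le> real C\<tau> - 1" by linarith
      thus "x \<le> ereal (real C\<tau> - 1)" using j(1) by simp
    qed
    moreover have "ereal (real C\<tau> - 1) < ereal (real C\<tau>)" by simp
    ultimately show ?thesis by (rule le_less_trans)
  qed
  have gapsub: "{u. r s \<le> u \<and> u < r l \<and> \<pi> u = None \<and> (u = r s \<or> \<pi> (u - 1) \<noteq> None)}
      \<subseteq> {u. r s \<le> u \<and> u < C\<sigma> \<and> \<sigma> u = None \<and> (u = r s \<or> \<sigma> (u - 1) \<noteq> None)}"
  proof
    fix u assume a: "u \<in> {u. r s \<le> u \<and> u < r l \<and> \<pi> u = None \<and> (u = r s \<or> \<pi> (u - 1) \<noteq> None)}"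
    have uB: "u \<notin> B" using a supp by auto
    hence ut: "u < \<theta>" "u \<notin> B0" using a unfolding B_def by auto
    have "\<sigma> u = None" using ut(2) a unfolding B0_def by auto
    moreover have "u = r s \<or> \<sigma> (u - 1) \<noteq> None"
    proof (cases "u = r s")
      case False
      hence "\<pi> (u - 1) \<noteq> None" using a by auto
      hence "u - 1 \<in> B" using supp by auto
      moreover have "u - 1 < \<theta>" using ut by simp
      ultimately have "u - 1 \<in> B0" unfolding B_def by auto
      thus ?thesis unfolding B0_def by auto
    qed simp
    ultimately show "u \<in> {u. r s \<le> u \<and> u < C\<sigma> \<and> \<sigma> u = None \<and> (u = r s \<or> \<sigma> (u - 1) \<noteq> None)}"
      using a Cs C\<sigma>_def by auto
  qed
  have "ngaps \<pi> (r s) (r l) \<le> ngaps \<sigma> (r s) C\<sigma>"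
    unfolding ngaps_def by (rule card_mono[OF _ gapsub]) auto
  hence "ngaps \<pi> (r s) (r l) \<le> g" using gs C\<sigma>_def by simp
  thus ?thesis using skp pv C\<tau>l C\<tau>_def by blast
qed

end


theorem lemma9:
  fixes n s k g l :: nat and p r d :: "nat \<Rightarrow> nat"
  assumes p_pos: "\<forall>j\<in>{1..n}. 1 \<le> p j"
    and d_mono: "\<forall>i j. 1 \<le> i \<and> i < j \<and> j \<le> n \<longrightarrow> d i < d j"
    and r_dist: "inj_on r {1..n}"
    and feas: "feasible n p r d"
    and s: "1 \<le> s" "s \<le> n"
    and k: "1 \<le> k" "k \<le> n"
    and l: "1 \<le> l" "l \<le> k - 1"
    and rl: "r s \<le> r l"
    and g: "g \<le> n - 1"
  shows "((\<exists>j. 1 \<le> j \<and> j < k \<and> r s \<le> r j \<and> r j < r l \<and> Cedf n p r d s j > enat (r l))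
            \<longrightarrow> P n p r d s k g l = \<infinity>) \<and>
         (P n p r d s k g l = 0 \<longleftrightarrow>
            (U n p r d s (k - 1) g \<ge> ereal (real (r l)) \<and>
             (\<forall>j. 1 \<le> j \<and> j < k \<and> r s \<le> r j \<and> r j < r l \<longrightarrow> Cedf n p r d s j \<le> enat (r l))))"
proof -
  interpret inst n p r d using p_pos d_mono feas by unfold_locales
  have rs': "(r(k := max (r s) (r k))) s = r s" by (cases "s = k") auto
  define Ps where "Ps = {enat q | q. \<exists>J \<sigma>.
       skp_sched n p r d s k q J \<sigma> \<and>
       prevr r (k - 1) (r l) < ereal (real (Cmax (r(k := max (r s) (r k))) s \<sigma>)) \<and>
       Cmax (r(k := max (r s) (r k))) s \<sigma> \<le> r l \<and>
       ngaps \<sigma> ((r(k := max (r s) (r k))) s) (r l) \<le> g}"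
  have Pdef: "P n p r d s k g l = Inf Ps" unfolding P_def Ps_def ..
  have wit: "thesis" if xP: "x \<in> Ps" and th: "\<And>q J \<sigma>. x = enat q \<Longrightarrow> skp_sched n p r d s k q J \<sigma> \<Longrightarrow>
       prevr r (k - 1) (r l) < ereal (real (Cmax r s \<sigma>)) \<Longrightarrow> Cmax r s \<sigma> \<le> r l \<Longrightarrow> ngaps \<sigma> (r s) (r l) \<le> g \<Longrightarrow> thesis"
    for x thesis
  proof -
    define R where "R = (\<lambda>q. \<exists>J \<sigma>. skp_sched n p r d s k q J \<sigma> \<and>
       prevr r (k - 1) (r l) < ereal (real (Cmax (r(k := max (r s) (r k))) s \<sigma>)) \<and>
       Cmax (r(k := max (r s) (r k))) s \<sigma> \<le> r l \<and>
       ngaps \<sigma> ((r(k := max (r s) (r k))) s) (r l) \<le> g)"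
    have "\<exists>q. x = enat q \<and> R q" using xP unfolding Ps_def R_def mem_Collect_eq .
    then obtain q where qq: "x = enat q \<and> R q" ..
    have "R q" using qq ..
    then obtain J where "\<exists>\<sigma>. skp_sched n p r d s k q J \<sigma> \<and>
       prevr r (k - 1) (r l) < ereal (real (Cmax (r(k := max (r s) (r k))) s \<sigma>)) \<and>
       Cmax (r(k := max (r s) (r k))) s \<sigma> \<le> r l \<and>
       ngaps \<sigma> ((r(k := max (r s) (r k))) s) (r l) \<le> g" unfolding R_def ..
    then obtain \<sigma> where w': "skp_sched n p r d s k q J \<sigma> \<and>
       prevr r (k - 1) (r l) < ereal (real (Cmax (r(k := max (r s) (r k))) s \<sigma>)) \<and>
       Cmax (r(k := max (r s) (r k))) s \<sigma> \<le> r l \<and>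
       ngaps \<sigma> ((r(k := max (r s) (r k))) s) (r l) \<le> g" ..
    have q: "x = enat q" using qq ..
    have w1: "skp_sched n p r d s k q J \<sigma>" using w' by (rule conjunct1)
    have w2: "prevr r (k - 1) (r l) < ereal (real (Cmax r s \<sigma>))" using conjunct1[OF conjunct2[OF w']] by (simp only: Cmax_upd)
    have w3: "Cmax r s \<sigma> \<le> r l" using conjunct1[OF conjunct2[OF conjunct2[OF w']]] by (simp only: Cmax_upd)
    have w4: "ngaps \<sigma> (r s) (r l) \<le> g" using conjunct2[OF conjunct2[OF conjunct2[OF w']]] by (simp only: rs')
    show ?thesis by (rule th[OF q w1 w2 w3 w4])
  qed
  have partA: "P n p r d s k g l = \<infinity>" if ex: "\<exists>j. 1 \<le> j \<and> j < k \<and> r s \<le> r j \<and> r j < r l \<and> Cedf n p r d s j > enat (r l)"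
  proof (rule ccontr)
    assume "P n p r d s k g l \<noteq> \<infinity>"
    hence "Inf Ps \<noteq> \<infinity>" using Pdef by simp
    hence "Ps \<noteq> {}" by (metis Inf_empty top_enat_def)
    then obtain x where "x \<in> Ps" by blast
    then obtain q J \<sigma> where w: "x = enat q" "skp_sched n p r d s k q J \<sigma>"
      "prevr r (k - 1) (r l) < ereal (real (Cmax r s \<sigma>))" "Cmax r s \<sigma> \<le> r l" "ngaps \<sigma> (r s) (r l) \<le> g"
      by (rule wit)
    obtain j where j: "1 \<le> j" "j < k" "r s \<le> r j" "r j < r l" "Cedf n p r d s j > enat (r l)" using ex by blast
    have w3: "prevr r (k - 1) (r l) < ereal (real (Cmax (r(k := max (r s) (r k))) s \<sigma>))" using w(3) by (simp only: Cmax_upd)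
    have w4: "Cmax (r(k := max (r s) (r k))) s \<sigma> \<le> r l" using w(4) by (simp only: Cmax_upd)
    have "Cedf n p r d s j \<le> enat (r l)" using witness_Cedf[OF w(2) w3 w4 j(1) j(2) k(2) j(3) j(4)] .
    thus False using j(5) by simp
  qed
  have fwd: "U n p r d s (k - 1) g \<ge> ereal (real (r l)) \<and>
             (\<forall>j. 1 \<le> j \<and> j < k \<and> r s \<le> r j \<and> r j < r l \<longrightarrow> Cedf n p r d s j \<le> enat (r l))"
    if P0: "P n p r d s k g l = 0"
  proof -
    have "Inf Ps \<le> enat 0" using P0 Pdef by (simp add: zero_enat_def)
    then obtain x where xP: "x \<in> Ps" and x0: "x \<le> enat 0" using enat_Inf_le by blast
    obtain q J \<sigma> where w: "x = enat q" "skp_sched n p r d s k q J \<sigma>"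
      "prevr r (k - 1) (r l) < ereal (real (Cmax r s \<sigma>))" "Cmax r s \<sigma> \<le> r l" "ngaps \<sigma> (r s) (r l) \<le> g"
      by (rule wit[OF xP])
    have q0: "q = 0" using w(1) x0 by simp
    have sk0: "skp_sched n p r d s k 0 J \<sigma>" using w(2) q0 by simp
    have kl: "1 \<le> l" "l \<le> k - 1" using l by auto
    have U: "ereal (real (r l)) \<le> U n p r d s (k - 1) g"
      using U_from_P0[OF sk0 w(3) w(4) w(5) k(2) kl rl] .
    have w3: "prevr r (k - 1) (r l) < ereal (real (Cmax (r(k := max (r s) (r k))) s \<sigma>))" using w(3) by (simp only: Cmax_upd)
    have w4: "Cmax (r(k := max (r s) (r k))) s \<sigma> \<le> r l" using w(4) by (simp only: Cmax_upd)
    have C: "Cedf n p r d s j \<le> enat (r l)" if jj: "1 \<le> j \<and> j < k \<and> r s \<le> r j \<and> r j < r l" for j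
    proof -
      have j: "1 \<le> j" "j < k" "r s \<le> r j" "r j < r l" using jj by auto
      show ?thesis using witness_Cedf[OF w(2) w3 w4 j(1) j(2) k(2) j(3) j(4)] .
    qed
    show ?thesis using U C by blast
  qed
  have bwd: "P n p r d s k g l = 0"
    if a: "U n p r d s (k - 1) g \<ge> ereal (real (r l))"
          "\<forall>j. 1 \<le> j \<and> j < k \<and> r s \<le> r j \<and> r j < r l \<longrightarrow> Cedf n p r d s j \<le> enat (r l)"
  proof -
    have kl: "1 \<le> l" "l \<le> k - 1" using l by auto
    obtain J \<tau> where t: "skp_sched n p r d s k 0 J \<tau>" "prevr r (k - 1) (r l) < ereal (real (Cmax r s \<tau>))"
      "Cmax r s \<tau> \<le> r l" "ngaps \<tau> (r s) (r l) \<le> g"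
      using P0_from[OF a(2) a(1) k(2) kl rl] by blast
    have t2: "prevr r (k - 1) (r l) < ereal (real (Cmax (r(k := max (r s) (r k))) s \<tau>))" using t(2) by (simp only: Cmax_upd)
    have t3: "Cmax (r(k := max (r s) (r k))) s \<tau> \<le> r l" using t(3) by (simp only: Cmax_upd)
    have t4: "ngaps \<tau> ((r(k := max (r s) (r k))) s) (r l) \<le> g" using t(4) by (simp only: rs')
    have "\<exists>J \<sigma>. skp_sched n p r d s k 0 J \<sigma> \<and>
       prevr r (k - 1) (r l) < ereal (real (Cmax (r(k := max (r s) (r k))) s \<sigma>)) \<and>
       Cmax (r(k := max (r s) (r k))) s \<sigma> \<le> r l \<and>
       ngaps \<sigma> ((r(k := max (r s) (r k))) s) (r l) \<le> g"
      using t(1) t2 t3 t4 by blast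
    hence "enat 0 \<in> Ps" unfolding Ps_def by blast
    hence "Inf Ps \<le> 0" using Inf_lower zero_enat_def by metis
    hence "Inf Ps = 0" by simp
    thus ?thesis using Pdef by simp
  qed
  show ?thesis using partA fwd bwd by blast
qed


end
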